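(* In the altruistic controlled social learning model described in the context, the myopic optimal policy and the optimal policy satisfy $\pi^0_A(b)\le\pi^*_A(b)$ for all $b\in[0,1]$.
   Context: A binary state $\omega\in\{G,B\}$ is drawn once. Agents $i=1,2,\dots$ act in sequence; a planner chooses precision $q_i\in[0.5,1]$ and agent $i$ receives a private signal $s_i$ with $\mathbb{P}(s_i=\omega)=q_i$, conditionally independent given $\omega$. Let $y(b,q)=1+2bq-b-q$, $z(b,q)=b+q-2bq$. With public belief $b_i$, agent $i$ takes $a_i=s_i$ if $1-q_i\le b_i\le q_i$, $G$ if $b_i>q_i$, $B$ if $b_i<1-q_i$; the public belief becomes $\frac{q_ib_i}{y(b_i,q_i)}$ (if $s_i=G$) or $\frac{(1-q_i)b_i}{z(b_i,q_i)}$ (if $s_i=B$) when $1-q_i\le b_i\le q_i$, and stays $b_i$ otherwise. With $C>0$, baseline $p\in[0.5,1)$ and cost $\beta:[0.5,1]\to[0,\infty)$ non-negative, increasing, continuous, concave with $\beta(p)=0$, the altruistic reward is $r_A(b,q)=-\beta(q)-C\min(b,1-b,1-q)$. Policies are deterministic Markov maps $\pi:[0,1]\to[0.5,1]$; for $\delta\in[0,1)$, $V^\pi_A(b)=\mathbb{E}[\sum_{i\ge1}\delta^{i-1}r_A(b_i,\pi(b_i))\mid b_1=b]$, $V^*_A=\sup_\pi V^\pi_A$, $\pi^*_A$ is an optimal policy, and the myopic optimal policy $\pi^0_A$ satisfies $\pi^0_A(b)\in\arg\sup_{q\in[0.5,1]}r_A(b,q)$ for each $b$. *)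

theory Defs
  imports "HOL-Probability.Probability"
begin

definition y_fn :: "real \<Rightarrow> real \<Rightarrow> real" where
  "y_fn b q = 1 + 2*b*q - b - q"

definition z_fn :: "real \<Rightarrow> real \<Rightarrow> real" where
  "z_fn b q = b + q - 2*b*q"

text \<open>Public-belief update after a signal (True = G, False = B) of precision q at belief b.\<close>
definition next_belief :: "real \<Rightarrow> real \<Rightarrow> bool \<Rightarrow> real" where
  "next_belief q b s =
     (if 1 - q \<le> b \<and> b \<le> q
      then (if s then q * b / y_fn b q else (1 - q) * b / z_fn b q)
      else b)"

text \<open>One-step transition of the public belief under policy pol: the signal is G with
  probability y(b,q) = P(s = G) given public belief b.\<close>
definition step_pmf :: "(real \<Rightarrow> real) \<Rightarrow> real \<Rightarrow> real pmf" where
  "step_pmf pol b = map_pmf (next_belief (pol b) b) (bernoulli_pmf (y_fn b (pol b)))"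

text \<open>Distribution of b_{n+1} given b_1 = b.\<close>
fun belief_pmf :: "(real \<Rightarrow> real) \<Rightarrow> nat \<Rightarrow> real \<Rightarrow> real pmf" where
  "belief_pmf pol 0 b = return_pmf b"
| "belief_pmf pol (Suc n) b = bind_pmf (belief_pmf pol n b) (step_pmf pol)"

definition rA :: "(real \<Rightarrow> real) \<Rightarrow> real \<Rightarrow> real \<Rightarrow> real \<Rightarrow> real" where
  "rA \<beta> C b q = - \<beta> q - C * min b (min (1 - b) (1 - q))"

definition is_policy :: "(real \<Rightarrow> real) \<Rightarrow> bool" where
  "is_policy pol \<longleftrightarrow> (\<forall>b\<in>{0..1}. pol b \<in> {1/2..1})"

definition VA :: "(real \<Rightarrow> real) \<Rightarrow> real \<Rightarrow> real \<Rightarrow> (real \<Rightarrow> real) \<Rightarrow> real \<Rightarrow> real" where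
  "VA \<beta> C \<delta> pol b =
     (\<Sum>n. \<delta> ^ n * measure_pmf.expectation (belief_pmf pol n b) (\<lambda>x. rA \<beta> C x (pol x)))"

definition VA_star :: "(real \<Rightarrow> real) \<Rightarrow> real \<Rightarrow> real \<Rightarrow> real \<Rightarrow> real" where
  "VA_star \<beta> C \<delta> b = (SUP pol\<in>{pol. is_policy pol}. VA \<beta> C \<delta> pol b)"

definition optimal_policy :: "(real \<Rightarrow> real) \<Rightarrow> real \<Rightarrow> real \<Rightarrow> (real \<Rightarrow> real) \<Rightarrow> bool" where
  "optimal_policy \<beta> C \<delta> pol \<longleftrightarrow>
     is_policy pol \<and> (\<forall>b\<in>{0..1}. VA \<beta> C \<delta> pol b = VA_star \<beta> C \<delta> b)"

definition myopic_optimal_policy :: "(real \<Rightarrow> real) \<Rightarrow> real \<Rightarrow> (real \<Rightarrow> real) \<Rightarrow> bool" where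
  "myopic_optimal_policy \<beta> C pol \<longleftrightarrow>
     is_policy pol \<and> (\<forall>b\<in>{0..1}. \<forall>q\<in>{1/2..1}. rA \<beta> C b q \<le> rA \<beta> C b (pol b))"

end

theory Submission
  imports Defs
begin

lemma nb_range:
  assumes q: "q \<in> {1/2..1}" and b: "b \<in> {0..1::real}"
  shows "next_belief q b s \<in> {0..1}"
proof -
  have y: "y_fn b q = q*b + (1-q)*(1-b)" by (simp add: y_fn_def algebra_simps)
  have z: "z_fn b q = (1-q)*b + q*(1-b)" by (simp add: z_fn_def algebra_simps)
  have a1: "0 \<le> q*b" "0 \<le> (1-q)*(1-b)" "0 \<le> (1-q)*b" "0 \<le> q*(1-b)" using q b by auto
  have "q * b / y_fn b q \<in> {0..1}"
    unfolding y using a1 by (auto simp: divide_le_eq_1)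
  moreover have "(1-q) * b / z_fn b q \<in> {0..1}"
    unfolding z using a1 by (auto simp: divide_le_eq_1)
  ultimately show ?thesis using b unfolding next_belief_def by auto
qed

lemma step_range:
  assumes "is_policy pol" "b \<in> {0..1::real}"
  shows "set_pmf (step_pmf pol b) \<subseteq> {0..1}"
  using assms nb_range unfolding step_pmf_def is_policy_def by auto

lemma belief_range:
  assumes "is_policy pol" "b \<in> {0..1::real}"
  shows "set_pmf (belief_pmf pol n b) \<subseteq> {0..1}"
proof (induction n)
  case 0 then show ?case using assms by simp
next
  case (Suc n)
  show ?case
  proof
    fix x assume "x \<in> set_pmf (belief_pmf pol (Suc n) b)"
    then obtain M where M: "M \<in> set_pmf (belief_pmf pol n b)" "x \<in> set_pmf (step_pmf pol M)"
      by (auto simp: set_bind_pmf)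
    have "M \<in> {0..1}" using M(1) Suc by blast
    then show "x \<in> {0..1}" using step_range[OF assms(1)] M(2) by blast
  qed
qed

lemma rA_bounds:
  assumes nn: "\<forall>q\<in>{1/2..1}. 0 \<le> \<beta> q" and mono: "mono_on {1/2..1} \<beta>" and C: "C > 0"
    and x: "x \<in> {0..1::real}" and q: "q \<in> {1/2..1::real}"
  shows "rA \<beta> C x q \<le> 0" "- \<beta> 1 - C \<le> rA \<beta> C x q"
proof -
  have "\<beta> q \<le> \<beta> 1" using mono q by (auto intro: mono_onD)
  moreover have "0 \<le> \<beta> q" using nn q by auto
  moreover have "0 \<le> min x (min (1 - x) (1 - q))" "min x (min (1 - x) (1 - q)) \<le> 1" using x q by auto
  moreover have "0 \<le> C * min x (min (1 - x) (1 - q))" "C * min x (min (1 - x) (1 - q)) \<le> C"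
    using C calculation(3,4) by (auto simp: mult_le_cancel_left1)
  ultimately show "rA \<beta> C x q \<le> 0" "- \<beta> 1 - C \<le> rA \<beta> C x q"
    unfolding rA_def by linarith+
qed

lemma VA_le:
  assumes nn: "\<forall>q\<in>{1/2..1}. 0 \<le> \<beta> q" and mono: "mono_on {1/2..1} \<beta>" and C: "C > 0"
    and pol: "is_policy pol" and b: "b \<in> {0..1::real}" and d: "0 \<le> \<delta>" "\<delta> < 1"
  shows "VA \<beta> C \<delta> pol b \<le> rA \<beta> C b (pol b)"
proof -
  define f where "f n = \<delta> ^ n * measure_pmf.expectation (belief_pmf pol n b) (\<lambda>x. rA \<beta> C x (pol x))" for n
  define K where "K = \<beta> 1 + C"
  have rb: "rA \<beta> C x (pol x) \<le> 0" "- \<beta> 1 - C \<le> rA \<beta> C x (pol x)" if "x \<in> {0..1}" for x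
    using rA_bounds[OF nn mono C that] pol that unfolding is_policy_def by auto
  have E: "norm (measure_pmf.expectation (belief_pmf pol n b) (\<lambda>x. rA \<beta> C x (pol x))) \<le> K"
    "measure_pmf.expectation (belief_pmf pol n b) (\<lambda>x. rA \<beta> C x (pol x)) \<le> 0" for n
  proof -
    let ?M = "belief_pmf pol n b"
    let ?g = "\<lambda>x. rA \<beta> C x (pol x)"
    have AEn: "AE x in measure_pmf ?M. norm (?g x) \<le> K"
    proof (rule AE_pmfI)
      fix y assume "y \<in> set_pmf ?M"
      then have y: "y \<in> {0..1}" using belief_range[OF pol b] by blast
      show "norm (?g y) \<le> K" using rb[OF y] unfolding K_def by simp
    qed
    have int: "integrable (measure_pmf ?M) ?g"
      by (rule measure_pmf.integrable_const_bound[OF AEn]) simp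
    have "norm (measure_pmf.expectation ?M ?g) \<le> measure_pmf.expectation ?M (\<lambda>x. norm (?g x))"
      by (rule integral_norm_bound)
    also have "\<dots> \<le> K"
      by (rule measure_pmf.integral_le_const) (use int AEn in auto)
    finally show "norm (measure_pmf.expectation ?M ?g) \<le> K" .
    show "measure_pmf.expectation ?M ?g \<le> 0"
    proof (rule measure_pmf.integral_le_const[OF int], rule AE_pmfI)
      fix y assume "y \<in> set_pmf ?M"
      then have y: "y \<in> {0..1}" using belief_range[OF pol b] by blast
      show "?g y \<le> 0" using rb[OF y] by simp
    qed
  qed
  have sg: "summable (\<lambda>n. \<delta> ^ n * K)"
    using d by (intro summable_mult2 summable_geometric) auto
  have nb: "norm (f n) \<le> \<delta> ^ n * K" for n
  proof -
    have "norm (f n) = \<delta> ^ n * norm (measure_pmf.expectation (belief_pmf pol n b) (\<lambda>x. rA \<beta> C x (pol x)))"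
      unfolding f_def norm_mult using d by simp
    also have "\<dots> \<le> \<delta> ^ n * K" by (rule mult_left_mono[OF E(1)]) (use d in simp)
    finally show ?thesis .
  qed
  have sf: "summable f"
    by (rule summable_comparison_test[OF _ sg]) (use nb in blast)
  have f0: "f 0 = rA \<beta> C b (pol b)" by (simp add: f_def)
  have "(\<Sum>n. f (Suc n)) \<le> (\<Sum>n. (0::real))"
  proof (rule suminf_le)
    show "summable (\<lambda>n. f (Suc n))" using sf by (simp add: summable_Suc_iff)
    show "summable (\<lambda>n. (0::real))" by simp
    fix n show "f (Suc n) \<le> 0" unfolding f_def using E(2)[of "Suc n"] d
      by (intro mult_nonneg_nonpos) auto
  qed
  then have "(\<Sum>n. f (Suc n)) \<le> 0" by simp
  moreover have "(\<Sum>n. f (Suc n)) = suminf f - f 0" by (rule suminf_split_head[OF sf])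
  ultimately show ?thesis unfolding VA_def f_def[symmetric] using f0 by simp
qed


lemma jump_support:
  assumes b: "0 < b" "b < (1::real)"
  defines "pol' \<equiv> (\<lambda>x. if x = b then 1 else 1/2)"
  shows "set_pmf (belief_pmf pol' (Suc n) b) \<subseteq> {0,1}"
proof (induction n)
  case 0
  have "next_belief 1 b s \<in> {0,1}" for s
    using b unfolding next_belief_def y_fn_def z_fn_def by auto
  then show ?case by (auto simp: step_pmf_def pol'_def)
next
  case (Suc n)
  have st: "set_pmf (step_pmf pol' x) \<subseteq> {x}" if "x \<in> {0,1}" for x
  proof -
    have "x \<noteq> b" using that b by auto
    then have px: "pol' x = 1/2" by (simp add: pol'_def)
    have nx: "next_belief (1/2) x s = x" for s
      using that unfolding next_belief_def by auto
    show ?thesis unfolding step_pmf_def px using nx by auto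
  qed
  show ?case
  proof
    fix x assume "x \<in> set_pmf (belief_pmf pol' (Suc (Suc n)) b)"
    then obtain M where M: "M \<in> set_pmf (belief_pmf pol' (Suc n) b)" "x \<in> set_pmf (step_pmf pol' M)"
      by (auto simp: set_bind_pmf)
    have "M \<in> {0,1}" using M(1) Suc by blast
    then show "x \<in> {0,1}" using st M(2) by blast
  qed
qed

lemma VA_jump:
  assumes b: "0 < b" "b < (1::real)" and bh: "\<beta> (1/2) = 0"
  defines "pol' \<equiv> (\<lambda>x. if x = b then 1 else 1/2)"
  shows "VA \<beta> C \<delta> pol' b = - \<beta> 1"
proof -
  define f where "f n = \<delta> ^ n * measure_pmf.expectation (belief_pmf pol' n b) (\<lambda>x. rA \<beta> C x (pol' x))" for n
  have f: "f = (\<lambda>n. if n = 0 then - \<beta> 1 else 0)"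
  proof
    fix n show "f n = (if n = 0 then - \<beta> 1 else 0)"
    proof (cases n)
      case 0
      then show ?thesis using b by (simp add: f_def pol'_def rA_def)
    next
      case (Suc m)
      have "measure_pmf.expectation (belief_pmf pol' n b) (\<lambda>x. rA \<beta> C x (pol' x)) = 0"
      proof (rule integral_eq_zero_AE, rule AE_pmfI)
        fix y assume "y \<in> set_pmf (belief_pmf pol' n b)"
        then have y: "y \<in> {0,1}" using jump_support[OF b, of m] Suc unfolding pol'_def by blast
        then have "y \<noteq> b" using b by auto
        then show "rA \<beta> C y (pol' y) = 0" using y bh by (auto simp: pol'_def rA_def)
      qed
      then show ?thesis using Suc by (simp add: f_def)
    qed
  qed
  have "f sums (- \<beta> 1)"
    unfolding f using sums_single[of 0 "\<lambda>_. - \<beta> 1"] by simp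
  then show ?thesis unfolding VA_def f_def[symmetric] by (simp add: sums_iff)
qed


lemma conc_bound:
  assumes cc: "concave_on {1/2..1} \<beta>" and nn: "\<forall>q\<in>{1/2..1}. 0 \<le> \<beta> q"
    and m: "0 < m" "m \<le> (1/2::real)" and q: "1 - m < q" "q \<le> 1"
  shows "m * \<beta> q \<ge> (q - 1 + m) * \<beta> 1"
proof -
  define a where "a = 1 - m"
  define t where "t = (q - a) / m"
  have t: "0 \<le> t" "t \<le> 1" using m q by (auto simp: t_def a_def field_simps)
  have aI: "a \<in> {1/2..1}" using m by (auto simp: a_def)
  have "(1 - t) * \<beta> a + t * \<beta> 1 \<le> \<beta> ((1 - t) *\<^sub>R a + t *\<^sub>R 1)"
    by (rule concave_onD[OF cc t]) (use aI in auto)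
  moreover have "(1 - t) *\<^sub>R a + t *\<^sub>R 1 = q" using m by (simp add: t_def a_def field_simps)
  moreover have "0 \<le> (1 - t) * \<beta> a" using t nn aI by auto
  ultimately have "t * \<beta> 1 \<le> \<beta> q" by simp
  then have "m * (t * \<beta> 1) \<le> m * \<beta> q" using m by (simp add: mult_left_mono)
  moreover have "m * (t * \<beta> 1) = (q - 1 + m) * \<beta> 1" using m by (simp add: t_def a_def field_simps)
  ultimately show ?thesis by simp
qed

lemma key:
  assumes cc: "concave_on {1/2..1} \<beta>" and nn: "\<forall>q\<in>{1/2..1}. 0 \<le> \<beta> q"
    and C: "C > 0" and b: "b \<in> {0..1::real}" and q: "q \<in> {1/2..1::real}"
  shows "\<beta> 1 < C * min b (1 - b) \<Longrightarrow> rA \<beta> C b q \<le> - \<beta> 1"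
    and "\<beta> 1 < C * min b (1 - b) \<Longrightarrow> q < 1 \<Longrightarrow> rA \<beta> C b q < - \<beta> 1"
    and "\<not> \<beta> 1 < C * min b (1 - b) \<Longrightarrow> rA \<beta> C b q \<le> - C * min b (1 - b)"
proof -
  define m where "m = min b (1 - b)"
  have r: "rA \<beta> C b q = - \<beta> q - C * min m (1 - q)"
    unfolding rA_def m_def by (simp add: min.assoc)
  have m0: "0 \<le> m" "m \<le> 1/2" using b by (auto simp: m_def min_def)
  have bq: "0 \<le> \<beta> q" "0 \<le> \<beta> 1" using nn q by auto
  have cb: "m * \<beta> q \<ge> (q - 1 + m) * \<beta> 1" if "1 - q < m"
    using conc_bound[OF cc nn _ m0(2) _] that q by auto
  {
    assume A: "\<beta> 1 < C * m"
    have "rA \<beta> C b q < - \<beta> 1" if "q < 1"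
    proof (cases "m \<le> 1 - q")
      case True
      then have "rA \<beta> C b q = - \<beta> q - C * m" using r by simp
      then show ?thesis using A bq by simp
    next
      case False
      then have rr: "rA \<beta> C b q = - \<beta> q - C * (1 - q)" using r by simp
      have mp: "0 < m" using False q by simp
      have "\<beta> 1 * (1 - q) < (C * m) * (1 - q)" using A that by (simp add: mult_strict_right_mono)
      then have "m * \<beta> 1 < m * (\<beta> q + C * (1 - q))"
        using cb False by (simp add: algebra_simps)
      then have "\<beta> 1 < \<beta> q + C * (1 - q)" using mp by simp
      then show ?thesis using rr by simp
    qed
    moreover have "rA \<beta> C b q \<le> - \<beta> 1"
    proof (cases "q < 1")
      case True then show ?thesis using calculation by fastforce
    next
      case False then have "q = 1" using q by simp
      then show ?thesis using r m0 by simp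
    qed
    ultimately have "rA \<beta> C b q \<le> - \<beta> 1" "q < 1 \<Longrightarrow> rA \<beta> C b q < - \<beta> 1" by auto
  }
  then show "\<beta> 1 < C * min b (1 - b) \<Longrightarrow> rA \<beta> C b q \<le> - \<beta> 1"
    and "\<beta> 1 < C * min b (1 - b) \<Longrightarrow> q < 1 \<Longrightarrow> rA \<beta> C b q < - \<beta> 1"
    unfolding m_def by auto
  show "\<not> \<beta> 1 < C * min b (1 - b) \<Longrightarrow> rA \<beta> C b q \<le> - C * min b (1 - b)"
  proof -
    assume "\<not> \<beta> 1 < C * min b (1 - b)"
    then have B: "C * m \<le> \<beta> 1" unfolding m_def by simp
    show "rA \<beta> C b q \<le> - C * min b (1 - b)"
    proof (cases "m \<le> 1 - q")
      case True
      then show ?thesis using r bq unfolding m_def by simp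
    next
      case False
      then have rr: "rA \<beta> C b q = - \<beta> q - C * (1 - q)" using r by simp
      have mp: "0 < m" using False q by simp
      have "(q - 1 + m) * (C * m) \<le> (q - 1 + m) * \<beta> 1" using B False by (simp add: mult_left_mono)
      then have "m * ((q - 1 + m) * C) \<le> m * \<beta> q" using cb False by (simp add: algebra_simps)
      then have "(q - 1 + m) * C \<le> \<beta> q" using mp by simp
      then show ?thesis using rr unfolding m_def[symmetric] by (simp add: algebra_simps)
    qed
  qed
qed


theorem lemma9:
  fixes \<beta> :: "real \<Rightarrow> real" and C p \<delta> :: real
  assumes "C > 0"
    and "1/2 \<le> p" and "p < 1"
    and "0 \<le> \<delta>" and "\<delta> < 1"
    and "\<forall>q\<in>{1/2..1}. 0 \<le> \<beta> q"
    and "mono_on {1/2..1} \<beta>"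
    and "continuous_on {1/2..1} \<beta>"
    and "concave_on {1/2..1} \<beta>"
    and "\<beta> p = 0"
  shows "\<exists>pol0. myopic_optimal_policy \<beta> C pol0 \<and>
           (\<forall>pols. optimal_policy \<beta> C \<delta> pols \<longrightarrow> (\<forall>b\<in>{0..1}. pol0 b \<le> pols b))"
proof -
  note nn = assms(6) and mono = assms(7) and cc = assms(9) and C = assms(1)
  have bh: "\<beta> (1/2) = 0"
  proof -
    have "\<beta> (1/2) \<le> \<beta> p" using mono assms(2,3) by (auto intro: mono_onD)
    moreover have "0 \<le> \<beta> (1/2)" using nn by auto
    ultimately show ?thesis using assms(10) by simp
  qed
  define pol0 where "pol0 b = (if \<beta> 1 < C * min b (1 - b) then 1 else (1/2::real))" for b
  have pp: "is_policy pol0" unfolding is_policy_def pol0_def by auto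
  have myo: "myopic_optimal_policy \<beta> C pol0"
    unfolding myopic_optimal_policy_def
  proof (intro conjI pp ballI)
    fix b q :: real assume b: "b \<in> {0..1}" and q: "q \<in> {1/2..1}"
    show "rA \<beta> C b q \<le> rA \<beta> C b (pol0 b)"
    proof (cases "\<beta> 1 < C * min b (1 - b)")
      case True
      have "min b (min (1 - b) 0) = 0" using b by (auto simp: min_def)
      then have "rA \<beta> C b (pol0 b) = - \<beta> 1" using True by (simp add: pol0_def rA_def)
      then show ?thesis using key(1)[OF cc nn C b q True] by simp
    next
      case False
      have "min b (min (1 - b) (1/2)) = min b (1 - b)" using b by (auto simp: min_def)
      then have "rA \<beta> C b (pol0 b) = - C * min b (1 - b)" using False bh
        by (simp add: pol0_def rA_def)
      then show ?thesis using key(3)[OF cc nn C b q False] by simp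
    qed
  qed
  have opt: "pol0 b \<le> pols b" if os: "optimal_policy \<beta> C \<delta> pols" and b: "b \<in> {0..1}" for pols b
  proof (cases "\<beta> 1 < C * min b (1 - b)")
    case False
    then show ?thesis using os b by (auto simp: pol0_def optimal_policy_def is_policy_def)
  next
    case True
    have pol: "is_policy pols" using os by (simp add: optimal_policy_def)
    have qb: "pols b \<in> {1/2..1}" using pol b by (simp add: is_policy_def)
    have "0 \<le> \<beta> 1" using nn by auto
    then have "0 < C * min b (1 - b)" using True by linarith
    then have "0 < min b (1 - b)" using C by (simp add: zero_less_mult_iff)
    then have b01: "0 < b" "b < 1" by auto
    show ?thesis
    proof (rule ccontr)
      assume "\<not> pol0 b \<le> pols b"
      then have "pols b < 1" using True by (simp add: pol0_def)
      then have lt: "rA \<beta> C b (pols b) < - \<beta> 1" using key(2)[OF cc nn C b qb True] by simp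
      have le: "VA \<beta> C \<delta> pols b \<le> rA \<beta> C b (pols b)"
        by (rule VA_le[OF nn mono C pol b assms(4,5)])
      define pol' where "pol' = (\<lambda>x. if x = b then 1 else (1/2::real))"
      have pp': "is_policy pol'" unfolding is_policy_def pol'_def by auto
      have vj: "VA \<beta> C \<delta> pol' b = - \<beta> 1" unfolding pol'_def by (rule VA_jump[where \<beta>=\<beta>, OF b01 bh])
      have bdd: "bdd_above ((\<lambda>pol. VA \<beta> C \<delta> pol b) ` {pol. is_policy pol})"
      proof (rule bdd_aboveI2)
        fix pol assume "pol \<in> {pol. is_policy pol}"
        then have ip: "is_policy pol" by simp
        then have "pol b \<in> {1/2..1}" using b by (simp add: is_policy_def)
        then have "rA \<beta> C b (pol b) \<le> 0" using rA_bounds(1)[OF nn mono C b] by blast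
        then show "VA \<beta> C \<delta> pol b \<le> 0" using VA_le[OF nn mono C ip b assms(4,5)] by simp
      qed
      have "VA \<beta> C \<delta> pol' b \<le> VA_star \<beta> C \<delta> b"
        unfolding VA_star_def by (rule cSUP_upper[OF _ bdd]) (use pp' in simp)
      moreover have "VA \<beta> C \<delta> pols b = VA_star \<beta> C \<delta> b" using os b by (simp add: optimal_policy_def)
      ultimately show False using lt le vj by simp
    qed
  qed
  show ?thesis using myo opt by blast
qed

end
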